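(* Let $\alpha>0$ be an ordinal, let $X$ be a topological space, let $Y$ be a regular-$U(\alpha)$-space, let $S$ be a dense subset of $X$ and let $f:S\to Y$ be continuous. Then the following are equivalent: (1) $f$ has a continuous extension to $X$; (2) for every family $\{A_\beta\}$ of closed subsets of $Y$ with $\bigcap_\beta A_\beta=\emptyset$ one has $\bigcap_\beta\overline{f^{-1}(A_\beta)}=\emptyset$ (closures in $X$).
   Context: For a subset $A$ of a space $Z$ and an ordinal $\alpha>0$, an $\alpha$-hull of $A$ is an open set $U\supseteq A$ for which there exists a family $\{U_\beta\}_{\beta\le\alpha}$ of open sets containing $A$ with $\mathrm{cl}\,U_\beta\subseteq U_{\beta+1}$ whenever $\beta+1\le\alpha$ and $U=U_\alpha=\bigcup_{\beta\le\alpha}U_\beta$. $Z$ is a regular-$U(\alpha)$-space if for every point $x$ and closed set $F$ with $x\notin F$ there are an $\alpha$-hull $U_x$ of $x$ and an $\alpha$-hull $U_F$ of $F$ with $\overline{U_x}\cap\overline{U_F}=\emptyset$. *)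

theory Defs
  imports "HOL-Analysis.Analysis"
begin

text \<open>Ordinals are represented by elements of a well-ordered type 'o: the ordinal
  \<alpha> is identified with the order type of the initial segment {..\<alpha>}.\<close>

definition is_succ :: "'o::wellorder \<Rightarrow> 'o \<Rightarrow> bool" where
  "is_succ \<beta> \<gamma> \<longleftrightarrow> \<beta> < \<gamma> \<and> (\<forall>\<delta>. \<beta> < \<delta> \<longrightarrow> \<gamma> \<le> \<delta>)"

definition alpha_hull :: "'a topology \<Rightarrow> 'o::wellorder \<Rightarrow> 'a set \<Rightarrow> 'a set \<Rightarrow> bool" where
  "alpha_hull Z \<alpha> A U \<longleftrightarrow>
     openin Z U \<and> A \<subseteq> U \<and>
     (\<exists>V :: 'o \<Rightarrow> 'a set.
        (\<forall>\<beta>\<le>\<alpha>. openin Z (V \<beta>) \<and> A \<subseteq> V \<beta>) \<and>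
        (\<forall>\<beta> \<gamma>. is_succ \<beta> \<gamma> \<and> \<gamma> \<le> \<alpha> \<longrightarrow> Z closure_of (V \<beta>) \<subseteq> V \<gamma>) \<and>
        U = V \<alpha> \<and> U = (\<Union>\<beta>\<in>{..\<alpha>}. V \<beta>))"

definition regular_U_space :: "'o::wellorder \<Rightarrow> 'a topology \<Rightarrow> bool" where
  "regular_U_space \<alpha> Z \<longleftrightarrow>
     (\<forall>x F. x \<in> topspace Z \<and> closedin Z F \<and> x \<notin> F \<longrightarrow>
        (\<exists>Ux UF. alpha_hull Z \<alpha> {x} Ux \<and> alpha_hull Z \<alpha> F UF \<and>
                 Z closure_of Ux \<inter> Z closure_of UF = {}))"

end

theory Submission
  imports Defs
begin

lemma regU_regular:
  assumes "regular_U_space \<alpha> Y" "openin Y W" "y \<in> W"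
  shows "\<exists>U. openin Y U \<and> y \<in> U \<and> Y closure_of U \<subseteq> W"
proof -
  have yt: "y \<in> topspace Y" using assms openin_subset by blast
  have cF: "closedin Y (topspace Y - W)" using assms by blast
  obtain Ux UF where h: "alpha_hull Y \<alpha> {y} Ux" "alpha_hull Y \<alpha> (topspace Y - W) UF"
     "Y closure_of Ux \<inter> Y closure_of UF = {}"
    using assms(1) yt cF assms(3) unfolding regular_U_space_def by blast
  have o: "openin Y Ux" "y \<in> Ux" using h(1) unfolding alpha_hull_def by auto
  have "topspace Y - W \<subseteq> UF" "openin Y UF" using h(2) unfolding alpha_hull_def by auto
  then have "topspace Y - W \<subseteq> Y closure_of UF"
    by (meson closure_of_subset openin_subset subset_trans)
  moreover have "Y closure_of Ux \<subseteq> topspace Y" by (rule closure_of_subset_topspace)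
  ultimately have "Y closure_of Ux \<subseteq> W" using h(3) by blast
  then show ?thesis using o by blast
qed

theorem theorem3p7:
  fixes \<alpha> :: "'o::wellorder"
    and X :: "'a topology" and Y :: "'b topology"
    and S :: "'a set" and f :: "'a \<Rightarrow> 'b"
  assumes "\<exists>\<beta>. \<beta> < \<alpha>"
    and "regular_U_space \<alpha> Y"
    and "S \<subseteq> topspace X" and "X closure_of S = topspace X"
    and "continuous_map (subtopology X S) Y f"
  shows "(\<exists>g. continuous_map X Y g \<and> (\<forall>x\<in>S. g x = f x)) \<longleftrightarrow>
         (\<forall>\<A>. (\<forall>A\<in>\<A>. closedin Y A) \<and> topspace Y \<inter> \<Inter>\<A> = {} \<longrightarrow>
               topspace X \<inter> (\<Inter>A\<in>\<A>. X closure_of {x\<in>S. f x \<in> A}) = {})"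
proof
  assume "\<exists>g. continuous_map X Y g \<and> (\<forall>x\<in>S. g x = f x)"
  then obtain g where g: "continuous_map X Y g" "\<forall>x\<in>S. g x = f x" by blast
  show "\<forall>\<A>. (\<forall>A\<in>\<A>. closedin Y A) \<and> topspace Y \<inter> \<Inter>\<A> = {} \<longrightarrow>
               topspace X \<inter> (\<Inter>A\<in>\<A>. X closure_of {x\<in>S. f x \<in> A}) = {}"
  proof (intro allI impI)
    fix \<A> :: "'b set set"
    assume A: "(\<forall>A\<in>\<A>. closedin Y A) \<and> topspace Y \<inter> \<Inter>\<A> = {}"
    show "topspace X \<inter> (\<Inter>A\<in>\<A>. X closure_of {x\<in>S. f x \<in> A}) = {}"
    proof (rule ccontr)
      assume "\<not> ?thesis"
      then obtain x where x: "x \<in> topspace X" "\<forall>A\<in>\<A>. x \<in> X closure_of {x\<in>S. f x \<in> A}" by blast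
      have "g x \<in> topspace Y" using continuous_map_image_subset_topspace[OF g(1)] x(1) by blast
      moreover have "g x \<in> A" if "A \<in> \<A>" for A
      proof -
        have "g x \<in> Y closure_of (g ` {x\<in>S. f x \<in> A})"
          using continuous_map_image_closure_subset[OF g(1), of "{x\<in>S. f x \<in> A}"] x(2) that by blast
        also have "\<dots> \<subseteq> Y closure_of A"
          by (rule closure_of_mono) (use g(2) in auto)
        also have "\<dots> = A" using A that by (simp add: closure_of_closedin)
        finally show ?thesis .
      qed
      ultimately have "g x \<in> topspace Y \<inter> \<Inter>\<A>" by blast
      then show False using A by simp
    qed
  qed
next
  assume H: "\<forall>\<A>. (\<forall>A\<in>\<A>. closedin Y A) \<and> topspace Y \<inter> \<Inter>\<A> = {} \<longrightarrow>
               topspace X \<inter> (\<Inter>A\<in>\<A>. X closure_of {x\<in>S. f x \<in> A}) = {}"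
  have fY: "f s \<in> topspace Y" if "s \<in> S" for s
    using assms(5) that assms(3) by (auto simp: continuous_map_def)
  define Lim where "Lim x y \<longleftrightarrow> y \<in> topspace Y \<and> (\<forall>W. openin Y W \<and> y \<in> W \<longrightarrow>
      (\<exists>N. openin X N \<and> x \<in> N \<and> (\<forall>s\<in>N\<inter>S. f s \<in> W)))" for x y
  have exL: "\<exists>y. Lim x y" if xt: "x \<in> topspace X" for x
  proof (rule ccontr)
    assume "\<not> ?thesis"
    then have "\<forall>y\<in>topspace Y. \<exists>W. openin Y W \<and> y \<in> W \<and>
       (\<forall>N. openin X N \<and> x \<in> N \<longrightarrow> (\<exists>s\<in>N\<inter>S. f s \<notin> W))"
      unfolding Lim_def by (meson Int_iff)
    then obtain Wf where Wf: "\<And>y. y \<in> topspace Y \<Longrightarrow> openin Y (Wf y) \<and> y \<in> Wf y \<and>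
       (\<forall>N. openin X N \<and> x \<in> N \<longrightarrow> (\<exists>s\<in>N\<inter>S. f s \<notin> Wf y))" by metis
    define \<A> where "\<A> = (\<lambda>y. topspace Y - Wf y) ` topspace Y"
    have "(\<forall>A\<in>\<A>. closedin Y A) \<and> topspace Y \<inter> \<Inter>\<A> = {}"
      unfolding \<A>_def using Wf by auto
    then have E: "topspace X \<inter> (\<Inter>A\<in>\<A>. X closure_of {x\<in>S. f x \<in> A}) = {}" using H by blast
    have "x \<in> X closure_of {x\<in>S. f x \<in> A}" if AA: "A \<in> \<A>" for A
    proof -
      obtain y where y: "y \<in> topspace Y" "A = topspace Y - Wf y" using AA \<A>_def by blast
      show ?thesis unfolding in_closure_of
      proof (intro conjI allI impI xt)
        fix T assume "x \<in> T \<and> openin X T"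
        then obtain s where "s \<in> T \<inter> S" "f s \<notin> Wf y" using Wf[OF y(1)] by blast
        then show "\<exists>ya. ya \<in> {x \<in> S. f x \<in> A} \<and> ya \<in> T" using fY y(2) by blast
      qed
    qed
    then show False using E xt by blast
  qed
  have LS: "Lim x (f x)" if "x \<in> S" for x
    unfolding Lim_def
  proof (intro conjI allI impI)
    show "f x \<in> topspace Y" using fY that .
    fix W assume W: "openin Y W \<and> f x \<in> W"
    have "openin (subtopology X S) {s \<in> topspace (subtopology X S). f s \<in> W}"
      using assms(5) W openin_continuous_map_preimage by blast
    then obtain N where "openin X N" "{s \<in> topspace (subtopology X S). f s \<in> W} = N \<inter> S"
      by (auto simp: openin_subtopology)
    then show "\<exists>N. openin X N \<and> x \<in> N \<and> (\<forall>s\<in>N \<inter> S. f s \<in> W)"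
      using that W assms(3) by (auto simp: topspace_subtopology)
  qed
  define g where "g x = (if x \<in> S then f x else (SOME y. Lim x y))" for x
  have Lg: "Lim x (g x)" if "x \<in> topspace X" for x
    using LS exL[OF that] unfolding g_def by (auto intro: someI_ex)
  have "continuous_map X Y g"
    unfolding continuous_map_def
  proof (intro conjI allI impI)
    show "g \<in> topspace X \<rightarrow> topspace Y" using Lg unfolding Lim_def by blast
    fix W assume W: "openin Y W"
    show "openin X {x \<in> topspace X. g x \<in> W}"
    proof (subst openin_subopen, intro ballI)
      fix x assume x: "x \<in> {x \<in> topspace X. g x \<in> W}"
      obtain U where U: "openin Y U" "g x \<in> U" "Y closure_of U \<subseteq> W"
        using regU_regular[OF assms(2) W] x by blast
      obtain N where N: "openin X N" "x \<in> N" "\<forall>s\<in>N\<inter>S. f s \<in> U"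
        using Lg[of x] x U unfolding Lim_def by blast
      have "g z \<in> W" if z: "z \<in> N" for z
      proof -
        have zt: "z \<in> topspace X" using N(1) z openin_subset by blast
        have "g z \<in> Y closure_of U"
        proof (rule ccontr)
          assume nc: "g z \<notin> Y closure_of U"
          have "openin Y (topspace Y - Y closure_of U)" by (simp add: closedin_closure_of openin_diff)
          moreover have "g z \<in> topspace Y" using Lg[OF zt] unfolding Lim_def by blast
          ultimately obtain N' where N': "openin X N'" "z \<in> N'"
            "\<forall>s\<in>N'\<inter>S. f s \<in> topspace Y - Y closure_of U"
            using Lg[OF zt] nc unfolding Lim_def by blast
          have "z \<in> X closure_of S" using assms(4) zt by simp
          then obtain s where "s \<in> S" "s \<in> N \<inter> N'"
            unfolding in_closure_of using N(1) N'(1) z N'(2) by blast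
          then have "f s \<in> U" "f s \<notin> Y closure_of U" using N(3) N'(3) by auto
          then show False using closure_of_subset[OF openin_subset[OF U(1)]] by blast
        qed
        then show ?thesis using U(3) by blast
      qed
      then show "\<exists>T. openin X T \<and> x \<in> T \<and> T \<subseteq> {x \<in> topspace X. g x \<in> W}"
        using N openin_subset by blast
    qed
  qed
  then show "\<exists>g. continuous_map X Y g \<and> (\<forall>x\<in>S. g x = f x)"
    unfolding g_def by auto
qed

end
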